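(* Let $n\ge1$ and $\pi\in\mathfrak B_n$ with $\pi_1>0$ (resp. $\pi_1<0$). Then for every $T\in\mathrm{Orb}^*(T_\pi)$, writing $w(T)=0\sigma_1\cdots\sigma_n$, one has $\sigma_1>0$ (resp. $\sigma_1<0$).
   Context: $\mathfrak B_n$ is the set of signed permutations $\pi=\pi_1\cdots\pi_n$ (words over $\{\pm1,\dots,\pm n\}$ with $|\pi_1|,\dots,|\pi_n|$ a permutation of $[n]$), compared as integers; set $\pi_0=0$. Trees are rooted binary trees with each child designated left or right. A min–max tree is labeled bijectively by a totally ordered set so that each node's label is the minimum or maximum of its subtree's labels. A node with a child is inner; an inner node is a min-node (resp. max-node) if its label is the minimum (resp. maximum) of its subtree. An HR-tree is a min–max tree in which every inner node $s$ has a nonempty right subtree containing the maximum label of the subtree of $s$ if $s$ is a min-node, the minimum if $s$ is a max-node. The reading word is the in-order reading $w(T)=w(L)\,\ell_{\mathrm{root}}\,w(R)$. $\mathcal{BHR}_n$ is the set of HR-trees with label set $\{0,s_1,\dots,s_n\}$, $s_i\in\{i,-i\}$, such that $0$ is the first letter of $w(T)$; $T\mapsto w(T)=0\pi_1\cdots\pi_n$ is a bijection $\mathcal{BHR}_n\to\mathfrak B_n$ and $T_\pi$ is the tree with $w(T_\pi)=0\pi$. Modified HR-action: for $i\in[n]$ and $T_\pi\in\mathcal{BHR}_n$, let $v$ be the node labeled $\pi_i$. If $v$ is a leaf, or if the node labeled $0$ is a leaf whose parent is $v$, then $\widehat\psi_i(T_\pi)=T_\pi$. Otherwise, let $R$ consist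 of $\pi_i$ and the labels of the right subtree of $v$; relabel $v$ and its right subtree, keeping the shape, so that $v$ receives $\max R$ if $v$ is a min-node and $\min R$ if $v$ is a max-node, the right subtree nodes receiving the remaining elements of $R$ by the order-preserving bijection from their old labels; all other labels are unchanged. The $\widehat\psi_i$ are commuting involutions on $\mathcal{BHR}_n$, and $\mathrm{Orb}^*(T)$ is the set of trees obtained from $T$ by compositions of the $\widehat\psi_i$, $i\in[n]$. *)

theory Defs
  imports Main "HOL-Library.Tree"
begin

(* Trees: HOL-Library 'int tree' (Leaf = empty tree, Node l x r).
   A node Node l x r is inner iff l \<noteq> Leaf or r \<noteq> Leaf. *)

definition signed_perms :: "nat \<Rightarrow> int list set" where
  "signed_perms n = {p. length p = n \<and> distinct (map abs p) \<and> set (map abs p) = {1..int n}}"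

fun minmax_ok :: "int tree \<Rightarrow> bool" where
  "minmax_ok Leaf = True"
| "minmax_ok (Node l x r) = (minmax_ok l \<and> minmax_ok r \<and>
     (x = Min (set_tree (Node l x r)) \<or> x = Max (set_tree (Node l x r))))"

definition min_max_tree :: "int tree \<Rightarrow> bool" where
  "min_max_tree t = (distinct (inorder t) \<and> minmax_ok t)"

fun hr_ok :: "int tree \<Rightarrow> bool" where
  "hr_ok Leaf = True"
| "hr_ok (Node l x r) = (hr_ok l \<and> hr_ok r \<and>
     ((l \<noteq> Leaf \<or> r \<noteq> Leaf) \<longrightarrow>
        (r \<noteq> Leaf \<and>
         (if x = Min (set_tree (Node l x r))
          then Max (set_tree (Node l x r)) \<in> set_tree r
          else Min (set_tree (Node l x r)) \<in> set_tree r))))"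

definition HR_tree :: "int tree \<Rightarrow> bool" where
  "HR_tree t = (min_max_tree t \<and> hr_ok t)"

definition BHR :: "nat \<Rightarrow> int tree set" where
  "BHR n = {t. HR_tree t \<and>
     (\<exists>s::nat \<Rightarrow> int. (\<forall>i\<in>{1..n}. s i = int i \<or> s i = - int i) \<and>
        set_tree t = insert 0 (s ` {1..n})) \<and>
     inorder t \<noteq> [] \<and> hd (inorder t) = 0}"

definition T_pi :: "int list \<Rightarrow> int tree" where
  "T_pi p = (THE t. t \<in> BHR (length p) \<and> inorder t = 0 # p)"

(* order-preserving bijection from finite A onto finite B (same size) *)
definition order_iso :: "int set \<Rightarrow> int set \<Rightarrow> int \<Rightarrow> int" where
  "order_iso A B y = sorted_list_of_set B ! card {z\<in>A. z < y}"

fun hr_flip :: "int tree \<Rightarrow> int tree" where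
  "hr_flip Leaf = Leaf"
| "hr_flip (Node l x r) =
     (if l = Leaf \<and> r = Leaf then Node l x r
      else if l = Node Leaf 0 Leaf \<or> r = Node Leaf 0 Leaf then Node l x r
      else (let R = insert x (set_tree r);
                y = (if x = Min (set_tree (Node l x r)) then Max R else Min R)
            in Node l y (map_tree (order_iso (set_tree r) (R - {y})) r)))"

fun relabel_at :: "int \<Rightarrow> int tree \<Rightarrow> int tree" where
  "relabel_at a Leaf = Leaf"
| "relabel_at a (Node l x r) =
     (if x = a then hr_flip (Node l x r) else Node (relabel_at a l) x (relabel_at a r))"

(* modified HR-action psi_i: v is the node labelled pi_i, where w(T) = 0 pi *)
definition psi :: "nat \<Rightarrow> int tree \<Rightarrow> int tree" where
  "psi i t = relabel_at (inorder t ! i) t"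

inductive_set orb :: "nat \<Rightarrow> int tree \<Rightarrow> int tree set" for n :: nat and t0 :: "int tree" where
  base: "t0 \<in> orb n t0"
| step: "t \<in> orb n t0 \<Longrightarrow> i \<in> {1..n} \<Longrightarrow> psi i t \<in> orb n t0"

end

theory Submission
  imports Defs
begin


lemma order_iso_in:
  assumes "finite A" "finite B" "card A \<le> card B" "y \<in> A"
  shows "order_iso A B y \<in> B"
proof -
  have "{z\<in>A. z < y} \<subset> A" using assms by auto
  hence "card {z\<in>A. z < y} < card A" using assms by (simp add: psubset_card_mono)
  hence "card {z\<in>A. z < y} < length (sorted_list_of_set B)" using assms by simp
  thus ?thesis unfolding order_iso_def using assms
    by (metis nth_mem sorted_list_of_set.set_sorted_key_list_of_set)
qed

lemma order_iso_inj:
  assumes "finite A" "finite B" "card A \<le> card B"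
  shows "inj_on (order_iso A B) A"
proof (rule inj_onI)
  have lt: "card {z\<in>A. z < y} < length (sorted_list_of_set B)" if "y \<in> A" for y
  proof -
    have "{z\<in>A. z < y} \<subset> A" using that by auto
    hence "card {z\<in>A. z < y} < card A" using assms by (simp add: psubset_card_mono)
    thus ?thesis using assms by simp
  qed
  have mono: "card {z\<in>A. z < y1} < card {z\<in>A. z < y2}" if "y1 \<in> A" "y1 < y2" for y1 y2
  proof -
    have "{z\<in>A. z < y1} \<subset> {z\<in>A. z < y2}" using that by auto
    thus ?thesis using assms by (simp add: psubset_card_mono)
  qed
  fix x y assume xy: "x \<in> A" "y \<in> A" "order_iso A B x = order_iso A B y"
  show "x = y"
  proof (rule ccontr)
    assume "x \<noteq> y"
    hence "x < y \<or> y < x" by auto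
    hence "card {z\<in>A. z < x} < card {z\<in>A. z < y} \<or> card {z\<in>A. z < y} < card {z\<in>A. z < x}"
      using mono xy by blast
    hence "card {z\<in>A. z < x} \<noteq> card {z\<in>A. z < y}" by linarith
    moreover have "distinct (sorted_list_of_set B)" by simp
    ultimately show False using xy lt unfolding order_iso_def
      by (simp add: nth_eq_iff_index_eq)
  qed
qed

lemma flip_ok:
  assumes "distinct (inorder (Node l x r))"
  shows "set_tree (hr_flip (Node l x r)) \<subseteq> set_tree (Node l x r) \<and>
         distinct (inorder (hr_flip (Node l x r)))"
proof -
  define R where "R = insert x (set_tree r)"
  define y where "y = (if x = Min (set_tree (Node l x r)) then Max R else Min R)"
  define f where "f = order_iso (set_tree r) (R - {y})"
  have xr: "x \<notin> set_tree r" and lr: "set_tree l \<inter> R = {}" and dl: "distinct (inorder l)"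
    and dr: "distinct (inorder r)"
    using assms by (auto simp: R_def)
  have "finite R" "R \<noteq> {}" by (auto simp: R_def)
  hence yR: "y \<in> R" unfolding y_def using Max_in Min_in by auto
  have card: "card (set_tree r) \<le> card (R - {y})" using yR xr by (simp add: R_def)
  have "finite (R - {y})" by (simp add: R_def)
  have fin: "f ` set_tree r \<subseteq> R - {y}" unfolding f_def
    using order_iso_in[OF finite_set_tree \<open>finite (R - {y})\<close> card] by (simp add: image_subset_iff)
  have inj: "inj_on f (set_tree r)" unfolding f_def using order_iso_inj[OF finite_set_tree \<open>finite (R - {y})\<close> card] .
  have res: "hr_flip (Node l x r) = Node l x r \<or> hr_flip (Node l x r) = Node l y (map_tree f r)"
    by (simp add: R_def y_def f_def Let_def)
  have s1: "set_tree (Node l y (map_tree f r)) \<subseteq> set_tree (Node l x r)"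
    using fin yR by (auto simp: R_def tree.set_map)
  have s2: "distinct (inorder (Node l y (map_tree f r)))"
    using fin yR lr dl dr inj by (auto simp: inorder_map distinct_map tree.set_map)
  show ?thesis
  proof (rule disjE[OF res])
    assume "hr_flip (Node l x r) = Node l x r" then show ?thesis using assms by simp
  next
    assume "hr_flip (Node l x r) = Node l y (map_tree f r)" then show ?thesis using s1 s2 by simp
  qed
qed

lemma relabel_ok:
  "distinct (inorder t) \<Longrightarrow> set_tree (relabel_at a t) \<subseteq> set_tree t \<and>
         distinct (inorder (relabel_at a t))"
proof (induction t)
  case Leaf then show ?case by simp
next
  case (Node l x r)
  show ?case
  proof (cases "x = a")
    case True then show ?thesis using flip_ok[OF Node.prems] by simp
  next
    case False
    have "distinct (inorder l)" "distinct (inorder r)" using Node.prems by auto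
    then have "set_tree (relabel_at a l) \<subseteq> set_tree l" "distinct (inorder (relabel_at a l))"
      "set_tree (relabel_at a r) \<subseteq> set_tree r" "distinct (inorder (relabel_at a r))"
      using Node.IH by auto
    then show ?thesis using False Node.prems by (auto simp del: set_inorder simp: set_inorder[symmetric])
  qed
qed

lemma flip_form: "hr_flip (Node l x r) = Node l x r \<or>
   (\<exists>y f. hr_flip (Node l x r) = Node l y (map_tree f r))"
  unfolding hr_flip.simps Let_def by auto

lemma flip_shape: "\<exists>y r'. hr_flip (Node l x r) = Node l y r' \<and> (r' = Leaf \<longleftrightarrow> r = Leaf)"
  using flip_form[of l x r] by (metis eq_map_tree_Leaf)

lemma flip_leaf0: "l = Node Leaf 0 Leaf \<Longrightarrow> hr_flip (Node l x r) = Node l x r"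
  by simp

lemma flip_single: "hr_flip (Node Leaf x Leaf) = Node Leaf x Leaf"
  by simp

declare hr_flip.simps(2)[simp del]

lemma flip_size: "size (hr_flip t) = size t"
proof (cases t)
  case Leaf then show ?thesis by simp
next
  case (Node l x r) then show ?thesis using flip_form[of l x r] by auto
qed

lemma relabel_size: "size (relabel_at a t) = size t"
  by (induction t) (auto simp: flip_size)

lemma relabel_Leaf: "relabel_at a t = Leaf \<longleftrightarrow> t = Leaf"
  using relabel_size[of a t] by (metis eq_size_0)

lemma relabel_leaf0: "relabel_at a t = Node Leaf 0 Leaf \<longleftrightarrow> t = Node Leaf 0 Leaf"
proof
  assume h: "relabel_at a t = Node Leaf 0 Leaf"
  then obtain l x r where t: "t = Node l x r" by (cases t) auto
  have "size t = 1" using relabel_size[of a t] h by simp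
  then have lr: "l = Leaf" "r = Leaf" using t by auto
  then show "t = Node Leaf 0 Leaf" using h t by (auto simp: flip_single split: if_splits)
qed (simp add: flip_single)


fun lm :: "int tree \<Rightarrow> (int \<times> int tree) option" where
  "lm Leaf = None"
| "lm (Node l x r) = (if l = Leaf then Some (x, r) else lm l)"

fun q0 :: "int tree \<Rightarrow> int option" where
  "q0 Leaf = None"
| "q0 (Node l x r) = (if l = Node Leaf 0 Leaf then Some x else if l = Leaf then None else q0 l)"

lemma q0_relabel: "q0 (relabel_at a t) = q0 t"
proof (induction t)
  case Leaf then show ?case by simp
next
  case (Node l x r)
  show ?case
  proof (cases "x = a")
    case True
    then have e1: "relabel_at a (Node l x r) = hr_flip (Node l x r)" by simp
    show ?thesis
    proof (cases "l = Node Leaf 0 Leaf")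
      case True then show ?thesis using e1 flip_leaf0[of l x r] by simp
    next
      case F: False
      obtain y r' where "relabel_at a (Node l x r) = Node l y r'" using e1 flip_shape by metis
      then show ?thesis using F by (simp del: relabel_at.simps)
    qed
  next
    case False then show ?thesis using Node.IH by (auto simp: relabel_Leaf relabel_leaf0)
  qed
qed

lemma q0_inorder: "q0 t = Some c \<Longrightarrow> \<exists>rest. inorder t = 0 # c # rest"
proof (induction t)
  case Leaf then show ?case by simp
next
  case (Node l x r)
  show ?case
  proof (cases "l = Node Leaf 0 Leaf")
    case True then show ?thesis using Node.prems by simp
  next
    case False
    then have "l \<noteq> Leaf" "q0 l = Some c" using Node.prems by (auto split: if_splits)
    then obtain rest where "inorder l = 0 # c # rest" using Node.IH(1) by blast
    then show ?thesis by simp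
  qed
qed

lemma lm_inorder: "lm t = Some (x0, r0) \<Longrightarrow> \<exists>rest. inorder t = x0 # inorder r0 @ rest"
proof (induction t)
  case Leaf then show ?case by simp
next
  case (Node l x r)
  show ?case
  proof (cases "l = Leaf")
    case True then show ?thesis using Node.prems by simp
  next
    case False
    then have "lm l = Some (x0, r0)" using Node.prems by simp
    then obtain rest where "inorder l = x0 # inorder r0 @ rest" using Node.IH(1) by blast
    then show ?thesis by simp
  qed
qed

lemma lm_ex: "t \<noteq> Leaf \<Longrightarrow> \<exists>x0 r0. lm t = Some (x0, r0)"
  by (induction t) auto

lemma lm_minmax: "lm t = Some (x0, r0) \<Longrightarrow> minmax_ok t \<Longrightarrow> minmax_ok (Node Leaf x0 r0)"
proof (induction t)
  case Leaf then show ?case by simp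
next
  case (Node l x r)
  show ?case
  proof (cases "l = Leaf")
    case True then show ?thesis using Node.prems by auto
  next
    case False
    then have "lm l = Some (x0, r0)" "minmax_ok l" using Node.prems by auto
    then show ?thesis using Node.IH(1) by blast
  qed
qed

lemma lm_relabel: "lm t = Some (x0, r0) \<Longrightarrow> a \<noteq> x0 \<Longrightarrow>
   lm (relabel_at a t) = Some (x0, r0) \<or> lm (relabel_at a t) = Some (x0, relabel_at a r0)"
proof (induction t)
  case Leaf then show ?case by simp
next
  case (Node l x r)
  show ?case
  proof (cases "l = Leaf")
    case True
    then have "x = x0" "r = r0" using Node.prems by auto
    then show ?thesis using True Node.prems(2) by simp
  next
    case lnL: False
    then have lml: "lm l = Some (x0, r0)" using Node.prems by simp
    show ?thesis
    proof (cases "x = a")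
      case True
      then have "relabel_at a (Node l x r) = hr_flip (Node l x r)" by simp
    then obtain y r' where "relabel_at a (Node l x r) = Node l y r'" using flip_shape by metis
      then show ?thesis using lml lnL by (simp del: relabel_at.simps)
    next
      case False
      then have "relabel_at a (Node l x r) = Node (relabel_at a l) x (relabel_at a r)" by simp
      moreover have "relabel_at a l \<noteq> Leaf" using lnL relabel_Leaf by blast
      ultimately show ?thesis using Node.IH(1)[OF lml Node.prems(2)] by (simp del: relabel_at.simps)
    qed
  qed
qed

lemma lm_q0: "lm t = Some (0, Leaf) \<Longrightarrow> inorder t = 0 # c # rest \<Longrightarrow> q0 t = Some c"
proof (induction t arbitrary: rest)
  case Leaf then show ?case by simp
next
  case (Node l x r)
  show ?case
  proof (cases "l = Leaf")
    case True then show ?thesis using Node.prems by auto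
  next
    case False
    then have lml: "lm l = Some (0, Leaf)" using Node.prems by simp
    show ?thesis
    proof (cases "l = Node Leaf 0 Leaf")
      case True then show ?thesis using Node.prems by simp
    next
      case F2: False
      obtain l1 x1 r1 where l: "l = Node l1 x1 r1" using False by (cases l) auto
      have "l1 \<noteq> Leaf" using lml F2 l by auto
      then have "length (inorder l) \<ge> 2" using l by (cases l1) auto
      obtain rest0 where r0: "inorder l = 0 # rest0" using lm_inorder[OF lml] by auto
      then obtain u v where "rest0 = u # v" using \<open>length (inorder l) \<ge> 2\<close>
        by (cases rest0) auto
      then have "inorder l = 0 # u # v" using r0 by simp
      moreover have "inorder (Node l x r) = inorder l @ x # inorder r" by simp
      ultimately have "u = c" using Node.prems(2) by simp
      then obtain rest' where "inorder l = 0 # c # rest'" using \<open>inorder l = 0 # u # v\<close> by blast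
      then show ?thesis using Node.IH(1)[OF lml] False F2 by simp
    qed
  qed
qed



definition bidx :: "int list \<Rightarrow> nat" where
  "bidx w = (LEAST k. w!k = Min (set w) \<or> w!k = Max (set w))"

lemma bidx_lt: "w \<noteq> [] \<Longrightarrow> bidx w < length w"
proof -
  assume "w \<noteq> []"
  then have "Min (set w) \<in> set w" by simp
  then obtain k where k: "k < length w" "w!k = Min (set w)" by (auto simp: in_set_conv_nth)
  then have "bidx w \<le> k" unfolding bidx_def by (intro Least_le) simp
  thus ?thesis using k by simp
qed

lemma bidx_P: "w \<noteq> [] \<Longrightarrow> w ! bidx w = Min (set w) \<or> w ! bidx w = Max (set w)"
proof -
  assume "w \<noteq> []"
  then have "Min (set w) \<in> set w" by simp
  then obtain k where k: "k < length w" "w!k = Min (set w)" by (auto simp: in_set_conv_nth)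
  then have "(\<lambda>j. w!j = Min (set w) \<or> w!j = Max (set w)) k" by simp
  from LeastI[of "\<lambda>j. w!j = Min (set w) \<or> w!j = Max (set w)" k, OF this]
  show ?thesis unfolding bidx_def .
qed

lemma bidx_min: "k < bidx w \<Longrightarrow> w!k \<noteq> Min (set w) \<and> w!k \<noteq> Max (set w)"
  unfolding bidx_def
  using not_less_Least[of k "\<lambda>k. w!k = Min (set w) \<or> w!k = Max (set w)"] by simp

function build :: "int list \<Rightarrow> int tree" where
  "build w = (if w = [] then Leaf else
     Node (build (take (bidx w) w)) (w ! bidx w) (build (drop (Suc (bidx w)) w)))"
  by pat_completeness auto
termination
  by (relation "measure length") (auto dest: bidx_lt)

declare build.simps[simp del]

lemma build_inorder: "inorder (build w) = w"
proof (induction w rule: build.induct)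
  case (1 w)
  show ?case
  proof (cases "w = []")
    case True then show ?thesis by (simp add: build.simps)
  next
    case False
    have "inorder (build w) = inorder (build (take (bidx w) w)) @ w ! bidx w # inorder (build (drop (Suc (bidx w)) w))"
      using False by (subst build.simps) simp
    also have "\<dots> = take (bidx w) w @ w ! bidx w # drop (Suc (bidx w)) w" using 1 False by simp
    also have "\<dots> = w" using id_take_nth_drop[OF bidx_lt[OF False]] by simp
    finally show ?thesis .
  qed
qed

lemma build_HR: "distinct w \<Longrightarrow> minmax_ok (build w) \<and> hr_ok (build w)"
proof (induction w rule: build.induct)
  case (1 w)
  show ?case
  proof (cases "w = []")
    case True then show ?thesis by (simp add: build.simps)
  next
    case False
    define i where "i = bidx w"
    define l where "l = build (take i w)"
    define r where "r = build (drop (Suc i) w)"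
    have i: "i < length w" using False bidx_lt i_def by auto
    have b: "build w = Node l (w!i) r" using False by (subst build.simps) (simp add: l_def r_def i_def)
    have IH: "minmax_ok l \<and> hr_ok l" "minmax_ok r \<and> hr_ok r"
      using "1.IH" False "1.prems" by (simp_all add: l_def r_def i_def)
    have sl: "set_tree l = set (take i w)" unfolding l_def
      by (metis build_inorder set_inorder)
    have sr: "set_tree r = set (drop (Suc i) w)" unfolding r_def
      by (metis build_inorder set_inorder)
    have ww: "w = take i w @ w!i # drop (Suc i) w" using id_take_nth_drop[OF i] .
    have sw: "set_tree (Node l (w!i) r) = set w" using sl sr ww
      by (metis build_inorder set_inorder b)
    have P: "w!i = Min (set w) \<or> w!i = Max (set w)" using bidx_P[OF False] i_def by simp
    have notl: "Min (set w) \<notin> set (take i w) \<and> Max (set w) \<notin> set (take i w)"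
    proof -
      have "v \<noteq> Min (set w) \<and> v \<noteq> Max (set w)" if "v \<in> set (take i w)" for v
      proof -
        from that obtain k where "k < length (take i w)" "take i w ! k = v" unfolding in_set_conv_nth by blast
        then have "k < i" "w ! k = v" by auto
        then show ?thesis using bidx_min i_def by blast
      qed
      then show ?thesis by blast
    qed
    have hr: "r \<noteq> Leaf \<and> (if w!i = Min (set w) then Max (set w) \<in> set_tree r else Min (set w) \<in> set_tree r)"
      if ne: "l \<noteq> Leaf \<or> r \<noteq> Leaf"
    proof -
      have e: "inorder (Node l (w!i) r) = w" using b build_inorder[of w] by simp
      have "length w = size l + 1 + size r" using arg_cong[OF e, of length] by simp
      then have "length w \<ge> 2" using ne by (cases l; cases r) auto
      then have "w!0 \<noteq> w!1" using "1.prems" nth_eq_iff_index_eq[of w 0 1] False by simp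
      moreover have "w!0 \<in> set w" "w!1 \<in> set w" using \<open>length w \<ge> 2\<close> by (auto intro!: nth_mem)
      ultimately have mm: "Min (set w) \<noteq> Max (set w)"
        by (metis Max_ge Min_le finite_set order_antisym)
      have inw: "Min (set w) \<in> set w" "Max (set w) \<in> set w" using False by auto
      have split: "set w = set (take i w) \<union> {w!i} \<union> set (drop (Suc i) w)"
        using ww by (metis Un_insert_right set_append list.simps(15) sup_bot.right_neutral Un_assoc Un_insert_left)
      show ?thesis
      proof (cases "w!i = Min (set w)")
        case True
        then have "Max (set w) \<in> set_tree r" using mm notl inw split sr by auto
        then show ?thesis using True by auto
      next
        case F: False
        then have "w!i = Max (set w)" using P by simp
        then have "Min (set w) \<in> set_tree r" using mm notl inw split sr by auto
        then show ?thesis using F by auto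
      qed
    qed
    have "minmax_ok (Node l (w!i) r)" using IH P sw by simp
    moreover have "hr_ok (Node l (w!i) r)" using IH hr unfolding hr_ok.simps sw by blast
    ultimately show ?thesis unfolding b by blast
  qed
qed

lemma HR_unique: "min_max_tree t \<Longrightarrow> hr_ok t \<Longrightarrow> build (inorder t) = t"
proof (induction t)
  case Leaf then show ?case by (simp add: build.simps)
next
  case (Node l x r)
  define w where "w = inorder (Node l x r)"
  define i where "i = length (inorder l)"
  have d: "distinct w" using Node.prems unfolding w_def min_max_tree_def by blast
  have mm: "minmax_ok l" "minmax_ok r" "x = Min (set w) \<or> x = Max (set w)"
    using Node.prems unfolding min_max_tree_def w_def by auto
  have hrs: "hr_ok l" "hr_ok r" using Node.prems by auto
  have dl: "distinct (inorder l)" "distinct (inorder r)" using d w_def by auto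
  have IHl: "build (inorder l) = l" using Node.IH(1) hrs mm dl by (simp add: min_max_tree_def)
  have IHr: "build (inorder r) = r" using Node.IH(2) hrs mm dl by (simp add: min_max_tree_def)
  have wx: "w ! i = x" by (simp add: w_def i_def nth_append)
  have sw: "set w = set_tree (Node l x r)" by (simp add: w_def)
  have other: "Min (set w) \<notin> set_tree l \<and> Max (set w) \<notin> set_tree l"
  proof (cases "l = Leaf \<and> r = Leaf")
    case True then show ?thesis by simp
  next
    case False
    have h0: "if x = Min (set_tree (Node l x r)) then Max (set_tree (Node l x r)) \<in> set_tree r
       else Min (set_tree (Node l x r)) \<in> set_tree r"
      using Node.prems(2) False unfolding hr_ok.simps by blast
    note h = h0[folded sw]
    have "x \<notin> set_tree l" "set_tree l \<inter> set_tree r = {}" using d w_def by auto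
    then show ?thesis using h mm(3) by (auto split: if_splits)
  qed
  have bi: "bidx w = i"
    unfolding bidx_def
  proof (rule Least_equality)
    show "w ! i = Min (set w) \<or> w ! i = Max (set w)" using wx mm(3) by simp
  next
    fix k assume k: "w ! k = Min (set w) \<or> w ! k = Max (set w)"
    show "i \<le> k"
    proof (rule ccontr)
      assume "\<not> i \<le> k"
      then have "k < length (inorder l)" using i_def by simp
      then have "w ! k = inorder l ! k" by (simp add: w_def nth_append)
      moreover have "inorder l ! k \<in> set (inorder l)" using \<open>k < length (inorder l)\<close> by (rule nth_mem)
      ultimately have "w ! k \<in> set_tree l" by simp
      then show False using k other by auto
    qed
  qed
  have "w \<noteq> []" by (simp add: w_def)
  then have "build w = Node (build (take i w)) (w!i) (build (drop (Suc i) w))"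
    by (subst build.simps) (simp add: bi)
  also have "take i w = inorder l" by (simp add: w_def i_def)
  also have "drop (Suc i) w = inorder r" by (simp add: w_def i_def)
  finally show ?case using IHl IHr wx w_def by simp
qed



lemma Tpi:
  assumes "p \<in> signed_perms n"
  shows "T_pi p = build (0#p)" "distinct (0#p)" "length p = n"
proof -
  have len: "length p = n" and da: "distinct (map abs p)" and sa: "set (map abs p) = {1..int n}"
    using assms unfolding signed_perms_def by auto
  have dp: "distinct p" and inj: "inj_on abs (set p)" using da by (auto simp: distinct_map)
  have "0 \<notin> set p"
  proof
    assume "0 \<in> set p"
    then have "abs 0 \<in> set (map abs p)" by (metis image_eqI list.set_map)
    then show False using sa by simp
  qed
  then show d0: "distinct (0#p)" using dp by simp
  show "length p = n" by (rule len)
  define t where "t = build (0#p)"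
  have it: "inorder t = 0 # p" by (simp add: t_def build_inorder)
  have hr: "minmax_ok t \<and> hr_ok t" using build_HR[OF d0] by (simp add: t_def)
  define s where "s = (\<lambda>i::nat. if int i \<in> set p then int i else - int i)"
  have s1: "\<forall>i\<in>{1..n}. s i = int i \<or> s i = - int i" by (simp add: s_def)
  have "set p \<subseteq> s ` {1..n}"
  proof
    fix z assume z: "z \<in> set p"
    then have az: "abs z \<in> {1..int n}" using sa by auto
    define i where "i = nat (abs z)"
    have i: "i \<in> {1..n}" "int i = abs z" using az by (auto simp: i_def)
    show "z \<in> s ` {1..n}"
    proof (cases "z > 0")
      case True
      then have "s i = z" using i z True by (simp add: s_def)
      then show ?thesis using i by blast
    next
      case False
      then have zneg: "z = - int i" using i by simp
      have "int i \<notin> set p"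
      proof
        assume "int i \<in> set p"
        then have "int i = z" using inj_onD[OF inj, of "int i" z] z i by simp
        then show False using zneg \<open>i \<in> {1..n}\<close> by simp
      qed
      then have "s i = z" using zneg by (simp add: s_def)
      then show ?thesis using i by blast
    qed
  qed
  moreover have "s ` {1..n} \<subseteq> set p"
  proof
    fix y assume "y \<in> s ` {1..n}"
    then obtain i where i: "i \<in> {1..n}" "y = s i" by blast
    then have "int i \<in> set (map abs p)" using sa by simp
    then obtain z where z: "z \<in> set p" "abs z = int i" by auto
    show "y \<in> set p"
    proof (cases "int i \<in> set p")
      case True then show ?thesis using i by (simp add: s_def)
    next
      case False
      then have "z = - int i" using z by (cases "z \<ge> 0") auto
      then show ?thesis using False i z by (simp add: s_def)
    qed
  qed
  ultimately have sp: "set p = s ` {1..n}" by blast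
  have st: "set_tree t = insert 0 (s ` {1..n})" using it sp by (metis set_inorder list.simps(15))
  have tB: "t \<in> BHR n"
    unfolding BHR_def HR_tree_def min_max_tree_def
    using hr it d0 s1 st by (auto intro!: exI[of _ s])
  have "(THE t'. t' \<in> BHR (length p) \<and> inorder t' = 0 # p) = t"
  proof (rule the_equality)
    show "t \<in> BHR (length p) \<and> inorder t = 0 # p" using tB it len by simp
  next
    fix t' assume h: "t' \<in> BHR (length p) \<and> inorder t' = 0 # p"
    then have "HR_tree t'" by (simp add: BHR_def)
    then have "build (inorder t') = t'" using HR_unique by (simp add: HR_tree_def)
    then show "t' = t" using h by (simp add: t_def)
  qed
  then show "T_pi p = build (0#p)" by (simp add: T_pi_def t_def)
qed

definition Inv :: "nat \<Rightarrow> int \<Rightarrow> int tree \<Rightarrow> bool" where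
  "Inv n c0 t = (q0 t = Some c0 \<or> (distinct (inorder t) \<and> size t = Suc n \<and>
      (\<exists>r0. lm t = Some (0, r0) \<and> r0 \<noteq> Leaf \<and> (\<forall>z\<in>set_tree r0. sgn z = sgn c0))))"

lemma Inv_step:
  assumes "Inv n c0 t" "i \<in> {1..n}"
  shows "Inv n c0 (psi i t)"
proof -
  define a where "a = inorder t ! i"
  have pe: "psi i t = relabel_at a t" by (simp add: psi_def a_def)
  show ?thesis
  proof (cases "q0 t = Some c0")
    case True then show ?thesis unfolding Inv_def pe by (simp add: q0_relabel)
  next
    case False
    then have d: "distinct (inorder t)" and sz: "size t = Suc n"
      and ex: "\<exists>r0. lm t = Some (0, r0) \<and> r0 \<noteq> Leaf \<and> (\<forall>z\<in>set_tree r0. sgn z = sgn c0)"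
      using assms(1) unfolding Inv_def by auto
    then obtain r0 where r0: "lm t = Some (0, r0)" "r0 \<noteq> Leaf" "\<forall>z\<in>set_tree r0. sgn z = sgn c0"
      by blast
    obtain rest where ir: "inorder t = 0 # inorder r0 @ rest" using lm_inorder[OF r0(1)] by blast
    have il: "i < length (inorder t)" using sz assms(2) by simp
    have "inorder t ! 0 = 0" using ir by simp
    then have a0: "a \<noteq> 0" using d il assms(2) nth_eq_iff_index_eq[of "inorder t" i 0]
      unfolding a_def by auto
    have dr0: "distinct (inorder r0)" using d ir by simp
    have d': "distinct (inorder (relabel_at a t))" using relabel_ok[OF d] by blast
    have sz': "size (relabel_at a t) = Suc n" using relabel_size sz by simp
    have "lm (relabel_at a t) = Some (0, r0) \<or> lm (relabel_at a t) = Some (0, relabel_at a r0)"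
      using lm_relabel[OF r0(1)] a0 by simp
    moreover have "relabel_at a r0 \<noteq> Leaf" using r0(2) relabel_Leaf by blast
    moreover have "\<forall>z\<in>set_tree (relabel_at a r0). sgn z = sgn c0"
      using relabel_ok[OF dr0, of a] r0(3) by blast
    ultimately show ?thesis unfolding Inv_def pe using d' sz' r0 by blast
  qed
qed

lemma Inv_concl:
  assumes "Inv n c0 t"
  shows "sgn (inorder t ! 1) = sgn c0"
proof (cases "q0 t = Some c0")
  case True
  then obtain rest where "inorder t = 0 # c0 # rest" using q0_inorder by blast
  then show ?thesis by simp
next
  case False
  then obtain r0 where r0: "lm t = Some (0, r0)" "r0 \<noteq> Leaf" "\<forall>z\<in>set_tree r0. sgn z = sgn c0"
    using assms unfolding Inv_def by blast
  obtain rest where ir: "inorder t = 0 # inorder r0 @ rest" using lm_inorder[OF r0(1)] by blast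
  obtain u v where uv: "inorder r0 = u # v" using r0(2) by (cases "inorder r0") auto
  have "u \<in> set_tree r0" using uv by (metis list.set_intros(1) set_inorder)
  then show ?thesis using ir uv r0(3) by simp
qed

lemma Inv_init:
  assumes "p \<in> signed_perms n" "n \<ge> 1"
  shows "Inv n (p ! 0) (T_pi p)"
proof -
  define t where "t = build (0#p)"
  have T: "T_pi p = t" and d: "distinct (0#p)" and len: "length p = n"
    using Tpi[OF assms(1)] by (auto simp: t_def)
  have it: "inorder t = 0 # p" by (simp add: t_def build_inorder)
  have hr: "minmax_ok t" using build_HR[OF d] by (simp add: t_def)
  have pne: "p \<noteq> []" using len assms(2) by auto
  then have pp: "p = p!0 # tl p" by (cases p) auto
  have "t \<noteq> Leaf" using it by auto
  then obtain x0 r0 where lmt: "lm t = Some (x0, r0)" using lm_ex by blast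
  obtain rest where ir: "inorder t = x0 # inorder r0 @ rest" using lm_inorder[OF lmt] by blast
  have x0: "x0 = 0" using ir it by simp
  show ?thesis
  proof (cases "r0 = Leaf")
    case True
    have "q0 t = Some (p!0)" using lm_q0[of t "p!0" "tl p"] lmt True x0 it pp by simp
    then show ?thesis unfolding Inv_def T by simp
  next
    case False
    obtain u v where uv: "inorder r0 = u # v" using False by (cases "inorder r0") auto
    have pu: "p ! 0 = u" using ir it uv x0 by simp
    have dt: "distinct (inorder t)" using it d by simp
    have n0: "0 \<notin> set_tree r0" using dt ir x0 by (metis distinct.simps(2) set_inorder Un_iff set_append)
    have mm: "minmax_ok (Node Leaf 0 r0)" using lm_minmax[OF lmt hr] x0 by simp
    then have mm': "0 = Min (insert 0 (set_tree r0)) \<or> 0 = Max (insert 0 (set_tree r0))" by simp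
    have uin: "u \<in> set_tree r0" using uv by (metis list.set_intros(1) set_inorder)
    have sg: "\<forall>z\<in>set_tree r0. sgn z = sgn u"
    proof (cases "0 = Min (insert 0 (set_tree r0))")
      case True
      have "z > 0" if "z \<in> set_tree r0" for z
      proof -
        have "Min (insert 0 (set_tree r0)) \<le> z" using that by (intro Min_le) auto
        then show ?thesis using True n0 that by (cases "z = 0") auto
      qed
      then show ?thesis using uin by simp
    next
      case F: False
      then have Mx: "0 = Max (insert 0 (set_tree r0))" using mm' by simp
      have "z < 0" if "z \<in> set_tree r0" for z
      proof -
        have "z \<le> Max (insert 0 (set_tree r0))" using that by (intro Max_ge) auto
        then show ?thesis using Mx n0 that by (cases "z = 0") auto
      qed
      then show ?thesis using uin by simp
    qed
    have "size t = Suc n" using it len by (metis length_inorder length_Cons)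
    then show ?thesis unfolding Inv_def T using dt lmt x0 False sg pu by auto
  qed
qed

theorem mainTheorem9:
  fixes n :: nat and p :: "int list" and T :: "int tree"
  assumes "n \<ge> 1" and "p \<in> signed_perms n" and "T \<in> orb n (T_pi p)"
  shows "(p ! 0 > 0 \<longrightarrow> inorder T ! 1 > 0) \<and> (p ! 0 < 0 \<longrightarrow> inorder T ! 1 < 0)"
proof -
  have "Inv n (p ! 0) T" using assms(3)
  proof (induction rule: orb.induct)
    case base then show ?case using Inv_init assms(1,2) by blast
  next
    case (step t i) then show ?case using Inv_step by blast
  qed
  then have "sgn (inorder T ! 1) = sgn (p ! 0)" by (rule Inv_concl)
  then show ?thesis by (auto simp: sgn_if split: if_splits)
qed

end
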